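(* Let $\widetilde\nabla$ be the canonical snm-connection on $\mathbb R^3$ determined by $\mathsf C=\partial_z$, and let $M$ be the rotational surface $\psi(s,t)=(x(s)\cos t,x(s)\sin t,z(s))$, $s\in I$, $t\in\mathbb R$, with $I$ an open interval, $x>0$ and $x'^2+z'^2=1$. If the sectional curvature $K$ of $M$ with respect to $\widetilde\nabla$ is constant, then neither of the functions $2z'-xx'$ and $xz'-x'$ vanishes identically on $I$.
   Context: Let $\langle\cdot,\cdot\rangle$ be the Euclidean metric on $\mathbb R^3$ and $\widetilde\nabla^0$ its Levi-Civita connection (the ordinary directional derivative). Given a smooth vector field $\mathsf C$ on $\mathbb R^3$, the semi-symmetric non-metric connection (snm-connection) determined by $\mathsf C$ is $\widetilde\nabla_XY=\widetilde\nabla^0_XY+\langle \mathsf C,Y\rangle X$. Its curvature tensor is $\widetilde R(X,Y)Z=\widetilde\nabla_X\widetilde\nabla_YZ-\widetilde\nabla_Y\widetilde\nabla_XZ-\widetilde\nabla_{[X,Y]}Z$. For a surface $M$ immersed in $\mathbb R^3$, the induced connection is $\nabla_XY=(\widetilde\nabla_XY)^{\top}$ (tangential component), with curvature tensor $R$ defined by the same formula, and the sectional curvature of $M$ with respect to $\widetilde\nabla$ at $p$ is $K(p)=\frac12\big(\langle R(e_1,e_2)e_2,e_1\rangle+\langle R(e_2,e_1)e_1,e_2\rangle\big)$ for an orthonormal basis $\{e_1,e_2\}$ of $T_pM$. *)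

theory Defs
  imports "HOL-Analysis.Analysis"
begin

text \<open>Fields along a parametrized surface psi : U \<subseteq> R^2 \<rightarrow> R^3 are
  represented as maps (s,t) \<mapsto> vector in R^3.\<close>

type_synonym sfield = "real \<times> real \<Rightarrow> real^3"

definition pd1 :: "sfield \<Rightarrow> sfield" where
  "pd1 Y p = vector_derivative (\<lambda>u. Y (u, snd p)) (at (fst p))"

definition pd2 :: "sfield \<Rightarrow> sfield" where
  "pd2 Y p = vector_derivative (\<lambda>u. Y (fst p, u)) (at (snd p))"

text \<open>Euclidean directional derivative D_W Y (Levi-Civita connection of R^3)
  of a field Y along the surface psi, in the direction of a tangent field W;
  W is expanded in the coordinate frame psi_s, psi_t via the first fundamental form.\<close>
definition dirderiv :: "sfield \<Rightarrow> sfield \<Rightarrow> sfield \<Rightarrow> sfield" where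
  "dirderiv psi W Y p =
     (let Ps = pd1 psi p; Pt = pd2 psi p;
          E = Ps \<bullet> Ps; F = Ps \<bullet> Pt; G = Pt \<bullet> Pt;
          w1 = W p \<bullet> Ps; w2 = W p \<bullet> Pt; D = E * G - F\<^sup>2;
          a = (G * w1 - F * w2) / D; b = (E * w2 - F * w1) / D
      in a *\<^sub>R pd1 Y p + b *\<^sub>R pd2 Y p)"

definition snm_conn :: "sfield \<Rightarrow> (real^3 \<Rightarrow> real^3) \<Rightarrow> sfield \<Rightarrow> sfield \<Rightarrow> sfield" where
  "snm_conn psi C W Y p = dirderiv psi W Y p + (C (psi p) \<bullet> Y p) *\<^sub>R W p"

definition unit_normal :: "sfield \<Rightarrow> sfield" where
  "unit_normal psi p = sgn (cross3 (pd1 psi p) (pd2 psi p))"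

definition tangential :: "sfield \<Rightarrow> sfield \<Rightarrow> sfield" where
  "tangential psi V p = V p - (V p \<bullet> unit_normal psi p) *\<^sub>R unit_normal psi p"

definition ind_conn :: "sfield \<Rightarrow> (real^3 \<Rightarrow> real^3) \<Rightarrow> sfield \<Rightarrow> sfield \<Rightarrow> sfield" where
  "ind_conn psi C W Y = tangential psi (snm_conn psi C W Y)"

definition lie_bracket :: "sfield \<Rightarrow> sfield \<Rightarrow> sfield \<Rightarrow> sfield" where
  "lie_bracket psi X Y p = dirderiv psi X Y p - dirderiv psi Y X p"

definition ind_curv :: "sfield \<Rightarrow> (real^3 \<Rightarrow> real^3) \<Rightarrow> sfield \<Rightarrow> sfield \<Rightarrow> sfield \<Rightarrow> sfield" where
  "ind_curv psi C X Y Z p =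
     ind_conn psi C X (ind_conn psi C Y Z) p - ind_conn psi C Y (ind_conn psi C X Z) p
     - ind_conn psi C (lie_bracket psi X Y) Z p"

definition frame1 :: "sfield \<Rightarrow> sfield" where
  "frame1 psi p = sgn (pd1 psi p)"

definition frame2 :: "sfield \<Rightarrow> sfield" where
  "frame2 psi p = sgn (pd2 psi p - (pd2 psi p \<bullet> frame1 psi p) *\<^sub>R frame1 psi p)"

definition sect_curv :: "sfield \<Rightarrow> (real^3 \<Rightarrow> real^3) \<Rightarrow> real \<times> real \<Rightarrow> real" where
  "sect_curv psi C p =
     (ind_curv psi C (frame1 psi) (frame2 psi) (frame2 psi) p \<bullet> frame1 psi p
      + ind_curv psi C (frame2 psi) (frame1 psi) (frame1 psi) p \<bullet> frame2 psi p) / 2"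

definition rot_surface :: "(real \<Rightarrow> real) \<Rightarrow> (real \<Rightarrow> real) \<Rightarrow> sfield" where
  "rot_surface x z p = vector [x (fst p) * cos (snd p), x (fst p) * sin (snd p), z (fst p)]"

definition partial_z :: "real^3 \<Rightarrow> real^3" where
  "partial_z q = vector [0, 0, 1]"

end

theory Submission imports Defs begin

lemma vec3_decomp: "(vector [a,b,c] :: real^3) = a *\<^sub>R vector[1,0,0] + b *\<^sub>R vector[0,1,0] + c *\<^sub>R vector[0,0,1]"
  by (simp add: vec_eq_iff forall_3)

lemma vec3_deriv:
  assumes "(f1 has_real_derivative d1) (at s)" "(f2 has_real_derivative d2) (at s)" "(f3 has_real_derivative d3) (at s)"
  shows "((\<lambda>u. vector [f1 u, f2 u, f3 u] :: real^3) has_vector_derivative vector [d1,d2,d3]) (at s)"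
proof -
  have "((\<lambda>u. f1 u *\<^sub>R (vector[1,0,0]::real^3) + f2 u *\<^sub>R vector[0,1,0] + f3 u *\<^sub>R vector[0,0,1]) has_vector_derivative
     d1 *\<^sub>R vector[1,0,0] + d2 *\<^sub>R vector[0,1,0] + d3 *\<^sub>R vector[0,0,1]) (at s)"
    using assms by (auto intro!: derivative_eq_intros simp: has_real_derivative_iff_has_vector_derivative)
  then show ?thesis by (simp only: vec3_decomp[symmetric])
qed

lemma const_deriv_zero:
  fixes f :: "real \<Rightarrow> real"
  assumes "open I" "s \<in> I" "\<And>u. u \<in> I \<Longrightarrow> f u = c" "(f has_real_derivative D) (at s)"
  shows "D = 0"
proof -
  have "(f has_real_derivative 0) (at s)"
    by (rule has_field_derivative_transform_within_open[of "\<lambda>_. c" _ _ I]) (use assms in auto)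
  then show ?thesis using assms(4) DERIV_unique by blast
qed

definition Tfv :: "(real \<Rightarrow> real) \<Rightarrow> (real \<Rightarrow> real) \<Rightarrow> real \<Rightarrow> real \<Rightarrow> real \<Rightarrow> real \<Rightarrow> real^3" where
  "Tfv x z c d s t = vector [c * deriv x s * cos t - d * sin t, c * deriv x s * sin t + d * cos t, c * deriv z s]"

definition Tf :: "(real \<Rightarrow> real) \<Rightarrow> (real \<Rightarrow> real) \<Rightarrow> (real \<Rightarrow> real) \<Rightarrow> (real \<Rightarrow> real) \<Rightarrow> sfield" where
  "Tf x z a b p = Tfv x z (a (fst p)) (b (fst p)) (fst p) (snd p)"

context
  fixes x z :: "real \<Rightarrow> real" and I :: "real set"
  assumes opI: "open I"
    and dx: "\<And>n s. s \<in> I \<Longrightarrow> ((deriv ^^ n) x) differentiable (at s)"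
    and dz: "\<And>n s. s \<in> I \<Longrightarrow> ((deriv ^^ n) z) differentiable (at s)"
    and xpos: "\<And>s. s \<in> I \<Longrightarrow> x s > 0"
    and unit: "\<And>s. s \<in> I \<Longrightarrow> (deriv x s)\<^sup>2 + (deriv z s)\<^sup>2 = 1"
begin

lemma Dx: "s \<in> I \<Longrightarrow> (x has_real_derivative deriv x s) (at s)"
  using dx[of s 0] by (simp add: DERIV_deriv_iff_real_differentiable)
lemma Dz: "s \<in> I \<Longrightarrow> (z has_real_derivative deriv z s) (at s)"
  using dz[of s 0] by (simp add: DERIV_deriv_iff_real_differentiable)
lemma Dx1: "s \<in> I \<Longrightarrow> (deriv x has_real_derivative deriv (deriv x) s) (at s)"
  using dx[of s 1] by (simp add: DERIV_deriv_iff_real_differentiable)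
lemma Dz1: "s \<in> I \<Longrightarrow> (deriv z has_real_derivative deriv (deriv z) s) (at s)"
  using dz[of s 1] by (simp add: DERIV_deriv_iff_real_differentiable)

lemma rel2: "s \<in> I \<Longrightarrow> deriv x s * deriv (deriv x) s + deriv z s * deriv (deriv z) s = 0"
proof -
  assume s: "s \<in> I"
  have "((\<lambda>u. (deriv x u)\<^sup>2 + (deriv z u)\<^sup>2) has_real_derivative
      2 * deriv x s * deriv (deriv x) s + 2 * deriv z s * deriv (deriv z) s) (at s)"
    using Dx1[OF s] Dz1[OF s] by (auto intro!: derivative_eq_intros)
  from const_deriv_zero[OF opI s _ this, of 1] unit show ?thesis by auto
qed

lemma pd1_psi: "pd1 (rot_surface x z) (s,t) = vector [deriv x s * cos t, deriv x s * sin t, deriv z s]"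
  if "s \<in> I"
  unfolding pd1_def rot_surface_def
  by (auto intro!: vector_derivative_at vec3_deriv derivative_eq_intros Dx Dz that)

lemma pd2_psi: "pd2 (rot_surface x z) (s,t) = vector [- x s * sin t, x s * cos t, 0]"
  unfolding pd2_def rot_surface_def
  by (auto intro!: vector_derivative_at vec3_deriv derivative_eq_intros)

lemma pd1_Tf:
  assumes s: "s \<in> I" and Y: "\<And>q. fst q \<in> I \<Longrightarrow> Y q = Tf x z a b q"
    and da: "(a has_real_derivative da) (at s)" and db: "(b has_real_derivative db) (at s)"
  shows "pd1 Y (s,t) = vector [(da * deriv x s + a s * deriv (deriv x) s) * cos t - db * sin t,
      (da * deriv x s + a s * deriv (deriv x) s) * sin t + db * cos t, da * deriv z s + a s * deriv (deriv z) s]"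
proof -
  have "((\<lambda>u. Tf x z a b (u,t)) has_vector_derivative vector [(da * deriv x s + a s * deriv (deriv x) s) * cos t - db * sin t,
      (da * deriv x s + a s * deriv (deriv x) s) * sin t + db * cos t, da * deriv z s + a s * deriv (deriv z) s]) (at s)"
    unfolding Tf_def Tfv_def fst_conv snd_conv
    by (rule vec3_deriv) (auto intro!: derivative_eq_intros Dx1 Dz1 s da db simp: algebra_simps)
  then have "((\<lambda>u. Y (u,t)) has_vector_derivative vector [(da * deriv x s + a s * deriv (deriv x) s) * cos t - db * sin t,
      (da * deriv x s + a s * deriv (deriv x) s) * sin t + db * cos t, da * deriv z s + a s * deriv (deriv z) s]) (at s)"
    by (rule has_vector_derivative_transform_within_open[OF _ opI s]) (simp add: Y)
  then show ?thesis unfolding pd1_def by (simp add: vector_derivative_at)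
qed

lemma pd2_Tf:
  assumes s: "s \<in> I" and Y: "\<And>q. fst q \<in> I \<Longrightarrow> Y q = Tf x z a b q"
  shows "pd2 Y (s,t) = vector [- a s * deriv x s * sin t - b s * cos t, a s * deriv x s * cos t - b s * sin t, 0]"
proof -
  have "((\<lambda>u. Tf x z a b (s,u)) has_vector_derivative vector [- a s * deriv x s * sin t - b s * cos t, a s * deriv x s * cos t - b s * sin t, 0]) (at t)"
    unfolding Tf_def Tfv_def fst_conv snd_conv
    by (rule vec3_deriv) (auto intro!: derivative_eq_intros simp: algebra_simps)
  moreover have "(\<lambda>u. Y (s,u)) = (\<lambda>u. Tf x z a b (s,u))" using Y s by auto
  ultimately show ?thesis unfolding pd2_def by (simp add: vector_derivative_at)
qed

lemma unit_normal_psi: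
  assumes s: "s \<in> I"
  shows "unit_normal (rot_surface x z) (s,t) = vector [- deriv z s * cos t, - deriv z s * sin t, deriv x s]"
proof -
  let ?N = "vector [- deriv z s * cos t, - deriv z s * sin t, deriv x s] :: real^3"
  have c: "cross3 (pd1 (rot_surface x z) (s,t)) (pd2 (rot_surface x z) (s,t)) = x s *\<^sub>R ?N"
    apply (simp add: pd1_psi[OF s] pd2_psi cross3_def vec_eq_iff forall_3)
    using sin_cos_squared_add[of t] by algebra
  have "?N \<bullet> ?N = 1" 
    apply (simp add: inner_vec_def sum_3)
    using unit[OF s] sin_cos_squared_add[of t] by algebra
  then have n1: "norm ?N = 1" by (simp add: norm_eq_sqrt_inner)
  show ?thesis unfolding unit_normal_def c using xpos[OF s] n1
    by (simp add: sgn_div_norm)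
qed

lemma dirderiv_T:
  assumes s: "s \<in> I" and W: "W (s,t) = Tfv x z c d s t"
  shows "dirderiv (rot_surface x z) W Y (s,t) = c *\<^sub>R pd1 Y (s,t) + (d / x s) *\<^sub>R pd2 Y (s,t)"
proof -
  let ?P1 = "vector [deriv x s * cos t, deriv x s * sin t, deriv z s] :: real^3"
  let ?P2 = "vector [- x s * sin t, x s * cos t, 0] :: real^3"
  have E: "?P1 \<bullet> ?P1 = 1" apply (simp add: inner_vec_def sum_3)
    using unit[OF s] sin_cos_squared_add[of t] by algebra
  have F: "?P1 \<bullet> ?P2 = 0" by (simp add: inner_vec_def sum_3 algebra_simps)
  have G: "?P2 \<bullet> ?P2 = (x s)\<^sup>2" apply (simp add: inner_vec_def sum_3)
    using sin_cos_squared_add[of t] by algebra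
  have w1: "W (s,t) \<bullet> ?P1 = c" unfolding W Tfv_def apply (simp add: inner_vec_def sum_3)
    using unit[OF s] sin_cos_squared_add[of t] by algebra
  have w2: "W (s,t) \<bullet> ?P2 = d * x s" unfolding W Tfv_def apply (simp add: inner_vec_def sum_3)
    using sin_cos_squared_add[of t] by algebra
  have xne: "x s \<noteq> 0" using xpos[OF s] by simp
  show ?thesis unfolding dirderiv_def Let_def pd1_psi[OF s] pd2_psi inner_commute[of ?P2 ?P1] E F G w1 w2
    using xne by (simp add: power2_eq_square)
qed

lemma conn_T:
  assumes s: "s \<in> I" and Y: "\<And>q. fst q \<in> I \<Longrightarrow> Y q = Tf x z a b q"
    and da: "(a has_real_derivative da) (at s)" and db: "(b has_real_derivative db) (at s)"
    and W: "W (s,t) = Tfv x z c d s t"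
  shows "ind_conn (rot_surface x z) partial_z W Y (s,t) =
    Tfv x z (c*da - d*b s*deriv x s/x s + a s*deriv z s*c) (c*db + d*a s*deriv x s/x s + a s*deriv z s*d) s t"
proof -
  have Ys: "Y (s,t) = Tf x z a b (s,t)" using Y s by simp
  have ps: "rot_surface x z (s,t) = rot_surface x z (s,t)" ..
  have xne: "x s \<noteq> 0" using xpos[OF s] by simp
  define xi where "xi = 1 / x s"
  have xi: "x s * xi = 1" using xne by (simp add: xi_def)
  have dd: "\<And>e. e / x s = e * xi" by (simp add: xi_def)
  note P1 = pd1_Tf[where Y=Y, OF s Y da db]
  note P2 = pd2_Tf[where Y=Y, OF s Y]
  show ?thesis
    unfolding ind_conn_def tangential_def snm_conn_def dirderiv_T[where W=W and Y=Y, OF s W]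
      unit_normal_psi[OF s] Ys W partial_z_def dd
    apply (simp add: P1 P2 Tf_def Tfv_def vec_eq_iff forall_3 inner_vec_def sum_3)
    using unit[OF s] sin_cos_squared_add[of t] rel2[OF s] xi by algebra
qed

lemma Tfv_inner: "s \<in> I \<Longrightarrow> Tfv x z a b s t \<bullet> Tfv x z c d s t = a * c + b * d"
  unfolding Tfv_def apply (simp add: inner_vec_def sum_3)
  using unit[of s] sin_cos_squared_add[of t] by algebra

lemma Tfv_diff: "Tfv x z a b s t - Tfv x z c d s t = Tfv x z (a - c) (b - d) s t"
  unfolding Tfv_def by (simp add: vec_eq_iff forall_3 algebra_simps)

lemma frame1_T: assumes s: "s \<in> I" shows "frame1 (rot_surface x z) (s,t) = Tfv x z 1 0 s t"
proof -
  let ?P1 = "vector [deriv x s * cos t, deriv x s * sin t, deriv z s] :: real^3"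
  have E: "?P1 \<bullet> ?P1 = 1" apply (simp add: inner_vec_def sum_3)
    using unit[OF s] sin_cos_squared_add[of t] by algebra
  then have "norm ?P1 = 1" by (simp add: norm_eq_sqrt_inner)
  then show ?thesis unfolding frame1_def pd1_psi[OF s] by (simp add: sgn_div_norm Tfv_def)
qed

lemma frame2_T: assumes s: "s \<in> I" shows "frame2 (rot_surface x z) (s,t) = Tfv x z 0 1 s t"
proof -
  let ?P2 = "vector [- x s * sin t, x s * cos t, 0] :: real^3"
  have "?P2 \<bullet> Tfv x z 1 0 s t = 0" by (simp add: Tfv_def inner_vec_def sum_3 algebra_simps)
  then have e: "pd2 (rot_surface x z) (s, t) - (pd2 (rot_surface x z) (s, t) \<bullet> frame1 (rot_surface x z) (s, t)) *\<^sub>R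
        frame1 (rot_surface x z) (s, t) = x s *\<^sub>R Tfv x z 0 1 s t"
    unfolding frame1_T[OF s] pd2_psi by (simp add: Tfv_def vec_eq_iff forall_3)
  have "Tfv x z 0 1 s t \<bullet> Tfv x z 0 1 s t = 1" using Tfv_inner[OF s] by simp
  then have "norm (Tfv x z 0 1 s t) = 1" by (simp add: norm_eq_sqrt_inner)
  then show ?thesis unfolding frame2_def e using xpos[OF s] by (simp add: sgn_div_norm)
qed

lemma F1: "fst q \<in> I \<Longrightarrow> frame1 (rot_surface x z) q = Tf x z (\<lambda>_. 1) (\<lambda>_. 0) q"
  by (cases q) (simp add: frame1_T Tf_def)
lemma F2: "fst q \<in> I \<Longrightarrow> frame2 (rot_surface x z) q = Tf x z (\<lambda>_. 0) (\<lambda>_. 1) q"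
  by (cases q) (simp add: frame2_T Tf_def)

lemma C22: "fst q \<in> I \<Longrightarrow> ind_conn (rot_surface x z) partial_z (frame2 (rot_surface x z)) (frame2 (rot_surface x z)) q
   = Tf x z (\<lambda>u. - (deriv x u / x u)) (\<lambda>_. 0) q"
  apply (cases q)
  apply (simp add: Tf_def)
  apply (subst conn_T[where a="\<lambda>_. 0" and b="\<lambda>_. 1" and da=0 and db=0 and c=0 and d=1])
  by (auto simp: F2 frame2_T Tf_def)

lemma C12: "fst q \<in> I \<Longrightarrow> ind_conn (rot_surface x z) partial_z (frame1 (rot_surface x z)) (frame2 (rot_surface x z)) q
   = Tf x z (\<lambda>_. 0) (\<lambda>_. 0) q"
  apply (cases q)
  apply (simp add: Tf_def)
  apply (subst conn_T[where a="\<lambda>_. 0" and b="\<lambda>_. 1" and da=0 and db=0 and c=1 and d=0])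
  by (auto simp: F2 frame1_T Tf_def)

lemma C11: "fst q \<in> I \<Longrightarrow> ind_conn (rot_surface x z) partial_z (frame1 (rot_surface x z)) (frame1 (rot_surface x z)) q
   = Tf x z (deriv z) (\<lambda>_. 0) q"
  apply (cases q)
  apply (simp add: Tf_def)
  apply (subst conn_T[where a="\<lambda>_. 1" and b="\<lambda>_. 0" and da=0 and db=0 and c=1 and d=0])
  by (auto simp: F1 frame1_T Tf_def)

lemma C21: "fst q \<in> I \<Longrightarrow> ind_conn (rot_surface x z) partial_z (frame2 (rot_surface x z)) (frame1 (rot_surface x z)) q
   = Tf x z (\<lambda>_. 0) (\<lambda>u. deriv x u / x u + deriv z u) q"
  apply (cases q)
  apply (simp add: Tf_def)
  apply (subst conn_T[where a="\<lambda>_. 1" and b="\<lambda>_. 0" and da=0 and db=0 and c=0 and d=1])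
  by (auto simp: F1 frame2_T Tf_def)

lemma LB12: assumes s: "s \<in> I"
  shows "lie_bracket (rot_surface x z) (frame1 (rot_surface x z)) (frame2 (rot_surface x z)) (s,t)
     = Tfv x z 0 (- (deriv x s / x s)) s t"
proof -
  have a: "dirderiv (rot_surface x z) (frame1 (rot_surface x z)) (frame2 (rot_surface x z)) (s,t) = 0"
    apply (subst dirderiv_T[where W="frame1 (rot_surface x z)" and c=1 and d=0, OF s frame1_T[OF s]])
    by (simp add: pd1_Tf[where a="\<lambda>_. 0" and b="\<lambda>_. 1" and da=0 and db=0, OF s F2] vec_eq_iff forall_3)
  have b: "dirderiv (rot_surface x z) (frame2 (rot_surface x z)) (frame1 (rot_surface x z)) (s,t) = Tfv x z 0 (deriv x s / x s) s t"
    apply (subst dirderiv_T[where W="frame2 (rot_surface x z)" and c=0 and d=1, OF s frame2_T[OF s]])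
    using xpos[OF s] by (simp add: pd2_Tf[where a="\<lambda>_. 1" and b="\<lambda>_. 0", OF s F1] Tfv_def vec_eq_iff forall_3)
  show ?thesis unfolding lie_bracket_def a b by (simp add: Tfv_def vec_eq_iff forall_3)
qed

lemma LB21: assumes s: "s \<in> I"
  shows "lie_bracket (rot_surface x z) (frame2 (rot_surface x z)) (frame1 (rot_surface x z)) (s,t)
     = Tfv x z 0 (deriv x s / x s) s t"
proof -
  have a: "dirderiv (rot_surface x z) (frame1 (rot_surface x z)) (frame2 (rot_surface x z)) (s,t) = 0"
    apply (subst dirderiv_T[where W="frame1 (rot_surface x z)" and c=1 and d=0, OF s frame1_T[OF s]])
    by (simp add: pd1_Tf[where a="\<lambda>_. 0" and b="\<lambda>_. 1" and da=0 and db=0, OF s F2] vec_eq_iff forall_3)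
  have b: "dirderiv (rot_surface x z) (frame2 (rot_surface x z)) (frame1 (rot_surface x z)) (s,t) = Tfv x z 0 (deriv x s / x s) s t"
    apply (subst dirderiv_T[where W="frame2 (rot_surface x z)" and c=0 and d=1, OF s frame2_T[OF s]])
    using xpos[OF s] by (simp add: pd2_Tf[where a="\<lambda>_. 1" and b="\<lambda>_. 0", OF s F1] Tfv_def vec_eq_iff forall_3)
  show ?thesis unfolding lie_bracket_def a b by simp
qed

lemma K_formula: assumes s: "s \<in> I"
  shows "sect_curv (rot_surface x z) partial_z (s,t) =
    - (deriv (deriv x) s / x s) + ((deriv z s)\<^sup>2 - deriv (deriv z) s - deriv x s * deriv z s / x s) / 2"
proof -
  let ?p = "rot_surface x z"
  have xne: "x s \<noteq> 0" using xpos[OF s] by simp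
  have d1: "((\<lambda>u. - (deriv x u / x u)) has_real_derivative
      - ((deriv (deriv x) s * x s - deriv x s * deriv x s) / (x s)\<^sup>2)) (at s)"
    using Dx1[OF s] Dx[OF s] xne by (auto intro!: derivative_eq_intros simp: power2_eq_square)
  have d2: "((\<lambda>u. deriv x u / x u + deriv z u) has_real_derivative
      ((deriv (deriv x) s * x s - deriv x s * deriv x s) / (x s)\<^sup>2) + deriv (deriv z) s) (at s)"
    using Dx1[OF s] Dx[OF s] Dz1[OF s] xne by (auto intro!: derivative_eq_intros simp: power2_eq_square)
  have r1a: "ind_conn ?p partial_z (frame1 ?p) (ind_conn ?p partial_z (frame2 ?p) (frame2 ?p)) (s,t)
     = Tfv x z (- ((deriv (deriv x) s * x s - deriv x s * deriv x s) / (x s)\<^sup>2) - (deriv x s / x s) * deriv z s) 0 s t"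
    by (subst conn_T[OF s C22 d1, where db=0 and c=1 and d=0]) (auto simp: frame1_T[OF s])
  have r1b: "ind_conn ?p partial_z (frame2 ?p) (ind_conn ?p partial_z (frame1 ?p) (frame2 ?p)) (s,t)
     = Tfv x z 0 0 s t"
    by (subst conn_T[OF s C12, where da=0 and db=0 and c=0 and d=1]) (auto simp: frame2_T[OF s])
  have r1c: "ind_conn ?p partial_z (lie_bracket ?p (frame1 ?p) (frame2 ?p)) (frame2 ?p) (s,t)
     = Tfv x z ((deriv x s / x s) * (deriv x s / x s)) 0 s t"
    by (subst conn_T[OF s F2, where da=0 and db=0 and c=0 and d="- (deriv x s / x s)"]) (auto simp: LB12[OF s])
  have r2a: "ind_conn ?p partial_z (frame2 ?p) (ind_conn ?p partial_z (frame1 ?p) (frame1 ?p)) (s,t)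
     = Tfv x z 0 (deriv z s * deriv x s / x s + deriv z s * deriv z s) s t"
    by (subst conn_T[OF s C11 Dz1[OF s], where db=0 and c=0 and d=1]) (auto simp: frame2_T[OF s])
  have r2b: "ind_conn ?p partial_z (frame1 ?p) (ind_conn ?p partial_z (frame2 ?p) (frame1 ?p)) (s,t)
     = Tfv x z 0 (((deriv (deriv x) s * x s - deriv x s * deriv x s) / (x s)\<^sup>2) + deriv (deriv z) s) s t"
    by (subst conn_T[OF s C21 _ d2, where da=0 and c=1 and d=0]) (auto simp: frame1_T[OF s])
  have r2c: "ind_conn ?p partial_z (lie_bracket ?p (frame2 ?p) (frame1 ?p)) (frame1 ?p) (s,t)
     = Tfv x z 0 ((deriv x s / x s) * (deriv x s / x s) + deriv z s * (deriv x s / x s)) s t"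
    by (subst conn_T[OF s F1, where da=0 and db=0 and c=0 and d="deriv x s / x s"]) (auto simp: LB21[OF s])
  show ?thesis
    unfolding sect_curv_def ind_curv_def r1a r1b r1c r2a r2b r2c Tfv_diff frame1_T[OF s] frame2_T[OF s] Tfv_inner[OF s]
    using xne by (simp add: field_simps power2_eq_square)
qed

end

lemma poly_aux1: "a * (a * 4) + X * (X * (a * a)) = (4::real) \<Longrightarrow>
     a * (a * 32) + (X * (X * (a * (a * 16))) + (a * (a * (a * (a * 32))) + X * (X * (a * (a * (a * (a * 8))))))) = 64"
proof -
  assume h: "a * (a * 4) + X * (X * (a * a)) = (4::real)"
  have "a * (a * 32) + (X * (X * (a * (a * 16))) + (a * (a * (a * (a * 32))) + X * (X * (a * (a * (a * (a * 8))))))) - 64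
     = (8*a*a+16) * (a * (a * 4) + X * (X * (a * a)) - 4)" by (simp add: algebra_simps)
  then show ?thesis using h by simp
qed

lemma chain_aux: "((v::real\<Rightarrow>real) has_real_derivative v') (at s) \<Longrightarrow>
   ((\<lambda>u. v u / 2 - 3 * (v u)\<^sup>2 / 2) has_real_derivative v' * (1/2 - 3 * v s)) (at s)"
  by (auto intro!: derivative_eq_intros simp: algebra_simps)

theorem proposition4p2:
  fixes x z :: "real \<Rightarrow> real" and I :: "real set"
  assumes "open I" and "is_interval I" and "I \<noteq> {}"
    and "\<And>n s. s \<in> I \<Longrightarrow> ((deriv ^^ n) x) differentiable (at s)"
    and "\<And>n s. s \<in> I \<Longrightarrow> ((deriv ^^ n) z) differentiable (at s)"
    and "\<And>s. s \<in> I \<Longrightarrow> x s > 0"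
    and "\<And>s. s \<in> I \<Longrightarrow> (deriv x s)\<^sup>2 + (deriv z s)\<^sup>2 = 1"
    and "\<exists>c. \<forall>s\<in>I. \<forall>t. sect_curv (rot_surface x z) partial_z (s, t) = c"
  shows "\<not> (\<forall>s\<in>I. 2 * deriv z s - x s * deriv x s = 0)
       \<and> \<not> (\<forall>s\<in>I. x s * deriv z s - deriv x s = 0)"
proof -
  note opI = assms(1) and xpos = assms(6) and unit = assms(7)
  have KF: "sect_curv (rot_surface x z) partial_z (s,t) =
    - (deriv (deriv x) s / x s) + ((deriv z s)\<^sup>2 - deriv (deriv z) s - deriv x s * deriv z s / x s) / 2"
    if "s \<in> I" for s t by (rule K_formula[of I x z]) (use assms that in auto)
  have rel2: "deriv x s * deriv (deriv x) s + deriv z s * deriv (deriv z) s = 0"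
    if "s \<in> I" for s by (rule rel2[of I x z]) (use assms that in auto)
  have Dx: "(x has_real_derivative deriv x s) (at s)" if "s \<in> I" for s
    using assms(4)[of s 0] that by (simp add: DERIV_deriv_iff_real_differentiable)
  have Dx1: "(deriv x has_real_derivative deriv (deriv x) s) (at s)" if "s \<in> I" for s
    using assms(4)[of s 1] that by (simp add: DERIV_deriv_iff_real_differentiable)
  have Dz1: "(deriv z has_real_derivative deriv (deriv z) s) (at s)" if "s \<in> I" for s
    using assms(5)[of s 1] that by (simp add: DERIV_deriv_iff_real_differentiable)
  obtain c where Kc: "\<And>s. s \<in> I \<Longrightarrow>
     - (deriv (deriv x) s / x s) + ((deriv z s)\<^sup>2 - deriv (deriv z) s - deriv x s * deriv z s / x s) / 2 = c"
    using assms(8) KF by metis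
  obtain s0 where s0: "s0 \<in> I" using assms(3) by blast
  have part1: False if H: "\<forall>s\<in>I. 2 * deriv z s - x s * deriv x s = 0"
  proof -
    have z1: "deriv z u = x u * deriv x u / 2" if "u \<in> I" for u using H that by auto
    have z2: "deriv (deriv z) s = ((deriv x s)\<^sup>2 + x s * deriv (deriv x) s) / 2" if s: "s \<in> I" for s
    proof -
      have "((\<lambda>u. x u * deriv x u / 2) has_real_derivative ((deriv x s)\<^sup>2 + x s * deriv (deriv x) s) / 2) (at s)"
        using Dx[OF s] Dx1[OF s] by (auto intro!: derivative_eq_intros simp: power2_eq_square)
      then have "(deriv z has_real_derivative ((deriv x s)\<^sup>2 + x s * deriv (deriv x) s) / 2) (at s)"
        by (rule has_field_derivative_transform_within_open[OF _ opI s]) (simp add: z1)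
      then show ?thesis using Dz1[OF s] DERIV_unique by blast
    qed
    have a2: "(deriv x s)\<^sup>2 * (4 + (x s)\<^sup>2) = 4" if s: "s \<in> I" for s
      using unit[OF s] z1[OF s] by (simp add: field_simps power2_eq_square)
    have x1ne: "deriv x s \<noteq> 0" if s: "s \<in> I" for s using a2[OF s] by auto
    have b2: "deriv (deriv x) s * (4 + (x s)\<^sup>2) = - x s * (deriv x s)\<^sup>2" if s: "s \<in> I" for s
    proof -
      have "deriv x s * (deriv (deriv x) s * (4 + (x s)\<^sup>2) + x s * (deriv x s)\<^sup>2) = 0"
        using rel2[OF s] z1[OF s] z2[OF s] by (simp add: field_simps power2_eq_square)
      then have "deriv (deriv x) s * (4 + (x s)\<^sup>2) + x s * (deriv x s)\<^sup>2 = 0" using x1ne[OF s] by simp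
      then show ?thesis by linarith
    qed
    have K1: "1/2 - 3 / ((x s)\<^sup>2 + 4) = c" if s: "s \<in> I" for s
    proof -
      have xs: "x s > 0" using xpos[OF s] .
      have dn: "4 + x s * x s \<noteq> 0" "x s * x s + 4 \<noteq> 0" by (smt (verit) zero_le_square)+
      have "- (deriv (deriv x) s / x s) + ((deriv z s)\<^sup>2 - deriv (deriv z) s - deriv x s * deriv z s / x s) / 2
          = 1/2 - 3 / ((x s)\<^sup>2 + 4)"
      proof -
        have dn2: "(x s)\<^sup>2 + 4 \<noteq> 0" "4 + (x s)\<^sup>2 \<noteq> 0" by (smt (verit) zero_le_power2)+
        have inv: "1 / ((x s)\<^sup>2 + 4) = (deriv x s)\<^sup>2 / 4" using a2[OF s] dn2 by (simp add: field_simps)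
        have r: "3 / ((x s)\<^sup>2 + 4) = 3 * (deriv x s)\<^sup>2 / 4" using inv by (simp add: divide_simps)
        have bb: "deriv (deriv x) s = - x s * (deriv x s)\<^sup>2 * ((deriv x s)\<^sup>2 / 4)"
          using b2[OF s] dn2 inv a2[OF s] apply (simp add: field_simps)
          by algebra
        show ?thesis unfolding z1[OF s] z2[OF s] r bb using a2[OF s]
          apply (simp add: field_simps power2_eq_square less_imp_neq[OF xs, symmetric])
          by (rule poly_aux1)
      qed
      then show ?thesis using Kc[OF s] by simp
    qed
    have "x u = x s0" if u: "u \<in> I" for u
    proof -
      have "3 / ((x u)\<^sup>2 + 4) = 3 / ((x s0)\<^sup>2 + 4)" using K1[OF u] K1[OF s0] by linarith
      then have "(x u)\<^sup>2 + 4 = (x s0)\<^sup>2 + 4" by (simp add: divide_cancel_left)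
      then have "(x u)\<^sup>2 = (x s0)\<^sup>2" by simp
      then show ?thesis using xpos[OF u] xpos[OF s0] by (simp add: power2_eq_iff)
    qed
    from const_deriv_zero[OF opI s0 this Dx[OF s0]] x1ne[OF s0] show False by simp
  qed
  have part2: False if H: "\<forall>s\<in>I. x s * deriv z s - deriv x s = 0"
  proof -
    have z1: "deriv z u = deriv x u / x u" if "u \<in> I" for u using H that xpos[OF that]
      by (auto simp: field_simps)
    have z2: "deriv (deriv z) s = (deriv (deriv x) s * x s - (deriv x s)\<^sup>2) / (x s)\<^sup>2" if s: "s \<in> I" for s
    proof -
      have "((\<lambda>u. deriv x u / x u) has_real_derivative (deriv (deriv x) s * x s - (deriv x s)\<^sup>2) / (x s)\<^sup>2) (at s)"
        using Dx[OF s] Dx1[OF s] xpos[OF s] by (auto intro!: derivative_eq_intros simp: power2_eq_square)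
      then have "(deriv z has_real_derivative (deriv (deriv x) s * x s - (deriv x s)\<^sup>2) / (x s)\<^sup>2) (at s)"
        by (rule has_field_derivative_transform_within_open[OF _ opI s]) (simp add: z1)
      then show ?thesis using Dz1[OF s] DERIV_unique by blast
    qed
    have a2: "(deriv x s)\<^sup>2 * (1 + (x s)\<^sup>2) = (x s)\<^sup>2" if s: "s \<in> I" for s
      using unit[OF s] z1[OF s] xpos[OF s] apply (simp add: field_simps power2_eq_square)
      by algebra
    have x1ne: "deriv x s \<noteq> 0" if s: "s \<in> I" for s using a2[OF s] xpos[OF s] by auto
    have b2: "deriv (deriv x) s * (x s * (1 + (x s)\<^sup>2)) = (deriv x s)\<^sup>2" if s: "s \<in> I" for s
    proof -
      have "deriv x s * (deriv (deriv x) s * (x s * (1 + (x s)\<^sup>2)) - (deriv x s)\<^sup>2) = 0"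
        using rel2[OF s] z1[OF s] z2[OF s] xpos[OF s] by (simp add: field_simps power2_eq_square)
      then show ?thesis using x1ne[OF s] by simp
    qed
    have K2: "inverse (1 + (x s)\<^sup>2) / 2 - 3 * (inverse (1 + (x s)\<^sup>2))\<^sup>2 / 2 = c" if s: "s \<in> I" for s
    proof -
      have xs: "x s > 0" using xpos[OF s] .
      have dn2: "1 + (x s)\<^sup>2 \<noteq> 0" by (smt (verit) zero_le_power2)
      have inv: "inverse (1 + (x s)\<^sup>2) = (deriv x s)\<^sup>2 / (x s)\<^sup>2" using a2[OF s] dn2 xs
        by (simp add: field_simps)
      have inv1: "1 / (1 + (x s)\<^sup>2) = (deriv x s)\<^sup>2 / (x s)\<^sup>2" using inv by (simp add: divide_inverse)
      have bb: "deriv (deriv x) s = (deriv x s)\<^sup>2 / x s * ((deriv x s)\<^sup>2 / (x s)\<^sup>2)"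
      proof -
        let ?X = "x s" and ?a = "deriv x s" and ?b = "deriv (deriv x) s"
        have "(?X^2 * ?X * ?b - ?a^2 * ?a^2) * (1 + ?X^2) = ?X^2 * (?b * (?X * (1 + ?X^2))) - ?a^2 * (?a^2 * (1 + ?X^2))"
          by (simp add: algebra_simps)
        also have "\<dots> = 0" using b2[OF s] a2[OF s] by simp
        finally have "?X^2 * ?X * ?b = ?a^2 * ?a^2" using dn2 by simp
        then show ?thesis using xs by (simp add: field_simps)
      qed
      have "- (deriv (deriv x) s / x s) + ((deriv z s)\<^sup>2 - deriv (deriv z) s - deriv x s * deriv z s / x s) / 2
          = inverse (1 + (x s)\<^sup>2) / 2 - 3 * (inverse (1 + (x s)\<^sup>2))\<^sup>2 / 2"
        unfolding z1[OF s] z2[OF s] inv bb using a2[OF s]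
        by (simp add: field_simps power2_eq_square less_imp_neq[OF xs, symmetric])
      then show ?thesis using Kc[OF s] by simp
    qed
    have x5: "(x s)\<^sup>2 = 5" if s: "s \<in> I" for s
    proof -
      have dn2: "1 + (x s)\<^sup>2 \<noteq> 0" by (smt (verit) zero_le_power2)
      have vpos: "inverse (1 + (x s)\<^sup>2) > 0" by (smt (verit) positive_imp_inverse_positive zero_le_power2)
      have Dv: "((\<lambda>u. inverse (1 + (x u)\<^sup>2)) has_real_derivative
          - (2 * x s * deriv x s) * (inverse (1 + (x s)\<^sup>2))\<^sup>2) (at s)"
        using Dx[OF s] dn2 by (auto intro!: derivative_eq_intros simp: power2_eq_square)
      have "((\<lambda>u. inverse (1 + (x u)\<^sup>2) / 2 - 3 * (inverse (1 + (x u)\<^sup>2))\<^sup>2 / 2) has_real_derivative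
          (- (2 * x s * deriv x s) * (inverse (1 + (x s)\<^sup>2))\<^sup>2) * (1/2 - 3 * inverse (1 + (x s)\<^sup>2))) (at s)"
        using chain_aux[OF Dv] .
      from const_deriv_zero[OF opI s K2 this]
      have "(- (2 * x s * deriv x s) * (inverse (1 + (x s)\<^sup>2))\<^sup>2) * (1/2 - 3 * inverse (1 + (x s)\<^sup>2)) = 0" .
      then have "1/2 - 3 * inverse (1 + (x s)\<^sup>2) = 0" using xpos[OF s] x1ne[OF s] vpos by auto
      then have "inverse (1 + (x s)\<^sup>2) = 1/6" by simp
      then have "1 + (x s)\<^sup>2 = 6" by (metis inverse_inverse_eq inverse_divide div_by_1 numeral_One)
      then show ?thesis by simp
    qed
    have "x u = sqrt 5" if "u \<in> I" for u
      using x5[OF that] xpos[OF that] by (metis abs_of_pos real_sqrt_abs)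
    from const_deriv_zero[OF opI s0 this Dx[OF s0]] x1ne[OF s0] show False by simp
  qed
  show ?thesis using part1 part2 by blast
qed

end
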